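(* Let $G$ be a finite graph with $n$ vertices, each of degree at least $1$. Take $r=2$, $V=\mathbb{C}^2$, $B=I_2$, and the tensors $A_1^1=0$, $A_1^2=t$, and for $d\ge 2$: $A_d^{i_1\dots i_d}=x_1$ if $(i_1,\dots,i_d)$ is a permutation of $(1,1,2,\dots,2)$, $=t$ if $(i_1,\dots,i_d)=(2,\dots,2)$, and $0$ otherwise, with $x_1=1$ and $t=0$. Then $\mathcal{F}_{\mathcal{A},I_2}(G)$ equals the number of spanning cycles of $G$, i.e. of $2$-valent subgraphs of $G$ with $n$ edges.
   Context: $\mathcal{F}_{\mathcal{A},B}(G)=\sum_{c:H\to\{1,\dots,r\}}\prod_{\{h,h'\}\in E(G)}B_{c(h)c(h')}\prod_{k}A_{d_k}^{c(h_{k,1})\dots c(h_{k,d_k})}$, where $H$ is the set of half-edges of $G$ (two per edge, loops included) and $h_{k,1},\dots,h_{k,d_k}$ are the half-edges at vertex $v_k$ of degree $d_k$; i.e. a copy of $A_{d_k}$ is placed at each vertex and contracted along edges using $B$. A cycle of $G$ is a $2$-valent subgraph (every vertex in it has degree $2$ within it, loops counted twice), not necessarily connected; a spanning cycle is one with $n=|V(G)|$ edges. *)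

theory Defs
  imports Complex_Main "HOL-Library.FuncSet" "HOL-Library.Product_Lexorder" "HOL-Library.Multiset"
begin

text \<open>A finite multigraph (loops and parallel edges allowed) with vertex set V,
edge set E and an endpoint map: edge e joins fst (ends e) and snd (ends e).
Half-edges are pairs (e, b), b :: bool; (e, False) sits at fst (ends e),
(e, True) sits at snd (ends e). A loop thus contributes two half-edges.\<close>

definition multigraph :: "'v set \<Rightarrow> 'e set \<Rightarrow> ('e \<Rightarrow> 'v \<times> 'v) \<Rightarrow> bool" where
  "multigraph V E ends \<longleftrightarrow> finite V \<and> finite E \<and>
     (\<forall>e\<in>E. fst (ends e) \<in> V \<and> snd (ends e) \<in> V)"

definition half_edges :: "'e set \<Rightarrow> ('e \<times> bool) set" where
  "half_edges E = E \<times> UNIV"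

definition hvertex :: "('e \<Rightarrow> 'v \<times> 'v) \<Rightarrow> 'e \<times> bool \<Rightarrow> 'v" where
  "hvertex ends h = (if snd h then snd (ends (fst h)) else fst (ends (fst h)))"

definition half_edges_at :: "'e set \<Rightarrow> ('e \<Rightarrow> 'v \<times> 'v) \<Rightarrow> 'v \<Rightarrow> ('e \<times> bool) set" where
  "half_edges_at S ends v = {h \<in> half_edges S. hvertex ends h = v}"

text \<open>Degree of v within the edge set S (loops counted twice).\<close>
definition degree_in :: "'e set \<Rightarrow> ('e \<Rightarrow> 'v \<times> 'v) \<Rightarrow> 'v \<Rightarrow> nat" where
  "degree_in S ends v = card (half_edges_at S ends v)"

text \<open>The partition function F_{A,B}(G): colours are 1..r; A d is the tensor placed
at a vertex of degree d, read on the list of colours of the half-edges at the vertex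
(listed in increasing order of half-edges); B is contracted along each edge.\<close>
definition partition_fun ::
  "nat \<Rightarrow> (nat \<Rightarrow> nat list \<Rightarrow> complex) \<Rightarrow> (nat \<Rightarrow> nat \<Rightarrow> complex) \<Rightarrow>
   'v set \<Rightarrow> 'e::linorder set \<Rightarrow> ('e \<Rightarrow> 'v \<times> 'v) \<Rightarrow> complex" where
  "partition_fun r A B V E ends =
     (\<Sum>c \<in> half_edges E \<rightarrow>\<^sub>E {1..r}.
        (\<Prod>e\<in>E. B (c (e, False)) (c (e, True))) *
        (\<Prod>v\<in>V. A (degree_in E ends v)
                   (map c (sorted_list_of_set (half_edges_at E ends v)))))"

definition A_cor :: "complex \<Rightarrow> complex \<Rightarrow> nat \<Rightarrow> nat list \<Rightarrow> complex" where
  "A_cor x1 t d is =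
     (if d = 1 then (if is = [1] then 0 else if is = [2] then t else 0)
      else if 2 \<le> d \<and> length is = d \<and> mset is = mset (1 # 1 # replicate (d - 2) 2) then x1
      else if 2 \<le> d \<and> is = replicate d 2 then t
      else 0)"

definition B_id :: "nat \<Rightarrow> nat \<Rightarrow> complex" where
  "B_id i j = (if i = j then 1 else 0)"

text \<open>Spanning cycles: 2-valent subgraphs (given by their edge set; every vertex of the
subgraph has degree 2 in it, i.e. every vertex of G has degree 0 or 2 in it) with n = |V| edges.\<close>
definition spanning_cycles :: "'v set \<Rightarrow> 'e set \<Rightarrow> ('e \<Rightarrow> 'v \<times> 'v) \<Rightarrow> 'e set set" where
  "spanning_cycles V E ends =
     {S. S \<subseteq> E \<and> (\<forall>v\<in>V. degree_in S ends v = 0 \<or> degree_in S ends v = 2)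
         \<and> card S = card V}"

end

theory Submission
  imports Defs
begin

lemma count12:
  assumes "set xs \<subseteq> {1,2::nat}"
  shows "count (mset xs) 1 + count (mset xs) 2 = length xs"
  using assms by (induction xs) auto

lemma mset_two_ones:
  assumes "set xs \<subseteq> {1,2::nat}" "length xs \<ge> 2"
  shows "(mset xs = mset (1 # 1 # replicate (length xs - 2) 2)) \<longleftrightarrow> count (mset xs) 1 = 2"
proof
  assume "mset xs = mset (1 # 1 # replicate (length xs - 2) 2)"
  then show "count (mset xs) 1 = 2" by simp
next
  assume h: "count (mset xs) 1 = 2"
  have c2: "count (mset xs) 2 = length xs - 2" using count12[OF assms(1)] h by simp
  show "mset xs = mset (1 # 1 # replicate (length xs - 2) 2)"
  proof (rule multiset_eqI)
    fix x
    show "count (mset xs) x = count (mset (1 # 1 # replicate (length xs - 2) 2)) x"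
    proof (cases "x = 1 \<or> x = 2")
      case True
      then show ?thesis using h c2 by auto
    next
      case False
      then have "x \<notin> set xs" using assms(1) by auto
      then have "count (mset xs) x = 0" by (simp add: count_mset_0_iff)
      then show ?thesis using False by auto
    qed
  qed
qed

lemma count_list_filter: "count_list xs x = length (filter (\<lambda>y. x = y) xs)"
  by (induction xs) auto

lemma prod_indicator:
  assumes "finite V"
  shows "(\<Prod>v\<in>V. (if P v then 1 else 0 :: complex)) = (if \<forall>v\<in>V. P v then 1 else 0)"
  using assms by (induction V rule: finite_induct) auto

lemma finite_hea: "finite E \<Longrightarrow> finite (half_edges_at E ends v)"
  unfolding half_edges_at_def half_edges_def by auto

lemma hea_mono: "S \<subseteq> E \<Longrightarrow> half_edges_at S ends v \<subseteq> half_edges_at E ends v"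
  unfolding half_edges_at_def half_edges_def by auto

lemma handshake:
  assumes "multigraph V E ends" "S \<subseteq> E"
  shows "(\<Sum>v\<in>V. degree_in S ends v) = 2 * card S"
proof -
  have fin: "finite V" "finite E" using assms(1) unfolding multigraph_def by auto
  have finS: "finite S" using fin assms(2) finite_subset by blast
  have U: "(\<Union>v\<in>V. half_edges_at S ends v) = half_edges S"
    using assms unfolding multigraph_def half_edges_at_def half_edges_def hvertex_def
    by (auto; metis subsetD)
  have "card (\<Union>v\<in>V. half_edges_at S ends v) = (\<Sum>v\<in>V. card (half_edges_at S ends v))"
    by (rule card_UN_disjoint) (use fin finS finite_hea in \<open>auto simp: half_edges_at_def\<close>)
  moreover have "card (half_edges S) = 2 * card S"
    unfolding half_edges_def using finS by (simp add: card_cartesian_product)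
  ultimately show ?thesis using U unfolding degree_in_def by simp
qed

theorem corollary2:
  fixes V :: "'v set" and E :: "'e::linorder set" and ends :: "'e \<Rightarrow> 'v \<times> 'v"
  assumes "multigraph V E ends"
    and "\<forall>v\<in>V. degree_in E ends v \<ge> 1"
  shows "partition_fun 2 (A_cor 1 0) B_id V E ends = of_nat (card (spanning_cycles V E ends))"
proof -
  have finV: "finite V" and finE: "finite E" using assms(1) unfolding multigraph_def by auto
  define cS where "cS S = (\<lambda>h\<in>half_edges E. if fst h \<in> S then 1 else 2::nat)" for S
  define tm where "tm c = (\<Prod>e\<in>E. B_id (c (e, False)) (c (e, True))) *
        (\<Prod>v\<in>V. A_cor 1 0 (degree_in E ends v)
                   (map c (sorted_list_of_set (half_edges_at E ends v))))" for c
  define P where "P S = (\<forall>v\<in>V. degree_in S ends v = 2)" for S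
  have pf: "partition_fun 2 (A_cor 1 0) B_id V E ends = (\<Sum>c \<in> half_edges E \<rightarrow>\<^sub>E {1..2}. tm c)"
    unfolding partition_fun_def tm_def by simp
  have sub: "cS ` Pow E \<subseteq> half_edges E \<rightarrow>\<^sub>E {1..2}"
    unfolding cS_def by auto
  have finPi: "finite (half_edges E \<rightarrow>\<^sub>E {1..(2::nat)})"
    by (rule finite_PiE) (use finE in \<open>auto simp: half_edges_def\<close>)
  have zero: "tm c = 0" if c: "c \<in> (half_edges E \<rightarrow>\<^sub>E {1..2}) - cS ` Pow E" for c
  proof (cases "\<forall>e\<in>E. c (e, False) = c (e, True)")
    case True
    define S where "S = {e\<in>E. c (e, False) = 1}"
    have "c = cS S"
    proof
      fix h
      show "c h = cS S h"
      proof (cases "h \<in> half_edges E")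
        case True
        obtain e b where h: "h = (e, b)" by (cases h)
        have eE: "e \<in> E" using True h unfolding half_edges_def by auto
        have "c h \<in> {1..2}" using c True by auto
        moreover have "c h = c (e, False)" using \<open>\<forall>e\<in>E. _\<close> eE h by (cases b) auto
        ultimately show ?thesis using True eE h unfolding cS_def S_def by auto
      next
        case False
        then show ?thesis using c unfolding cS_def by (cases h) (auto simp: PiE_def extensional_def)
      qed
    qed
    moreover have "S \<in> Pow E" unfolding S_def by auto
    ultimately show ?thesis using c by auto
  next
    case False
    then obtain e where "e \<in> E" "c (e, False) \<noteq> c (e, True)" by auto
    then have "(\<Prod>e\<in>E. B_id (c (e, False)) (c (e, True))) = 0"
      using finE by (auto intro!: prod_zero simp: B_id_def)
    then show ?thesis unfolding tm_def by simp
  qed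
  have inj: "inj_on cS (Pow E)"
  proof
    fix S1 S2 assume S: "S1 \<in> Pow E" "S2 \<in> Pow E" "cS S1 = cS S2"
    show "S1 = S2"
    proof (rule set_eqI)
      fix e
      show "e \<in> S1 \<longleftrightarrow> e \<in> S2"
      proof (cases "e \<in> E")
        case True
        then have "(e, False) \<in> half_edges E" unfolding half_edges_def by auto
        then have "cS S1 (e, False) = cS S2 (e, False)" using S by simp
        then show ?thesis using \<open>(e, False) \<in> half_edges E\<close> unfolding cS_def by (auto split: if_splits)
      next
        case False then show ?thesis using S by auto
      qed
    qed
  qed
  have termS: "tm (cS S) = (if P S then 1 else 0)" if SE: "S \<subseteq> E" for S
  proof -
    have B1: "(\<Prod>e\<in>E. B_id (cS S (e, False)) (cS S (e, True))) = 1"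
      by (rule prod.neutral) (auto simp: B_id_def cS_def half_edges_def)
    have fac: "A_cor 1 0 (degree_in E ends v) (map (cS S) (sorted_list_of_set (half_edges_at E ends v)))
              = (if degree_in S ends v = 2 then 1 else 0)" if vV: "v \<in> V" for v
    proof -
      define H where "H = half_edges_at E ends v"
      define xs where "xs = map (cS S) (sorted_list_of_set H)"
      have finH: "finite H" unfolding H_def using finite_hea[OF finE] .
      have len: "length xs = degree_in E ends v"
        unfolding xs_def H_def degree_in_def using finH H_def by simp
      have setxs: "set xs \<subseteq> {1,2}"
        unfolding xs_def using finH by (auto simp: cS_def H_def half_edges_at_def)
      have "count (mset xs) 1 = length (filter (\<lambda>h. 1 = cS S h) (sorted_list_of_set H))"
        unfolding xs_def count_mset count_list_filter by (simp add: filter_map o_def)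
      also have "\<dots> = card ({h. 1 = cS S h} \<inter> H)"
        using finH by (simp add: distinct_length_filter)
      also have "{h. 1 = cS S h} \<inter> H = half_edges_at S ends v"
        using SE unfolding H_def half_edges_at_def half_edges_def cS_def by auto
      finally have cnt: "count (mset xs) 1 = degree_in S ends v" unfolding degree_in_def .
      have le: "degree_in S ends v \<le> degree_in E ends v"
        unfolding degree_in_def by (rule card_mono[OF finite_hea[OF finE] hea_mono[OF SE]])
      show ?thesis
      proof (cases "degree_in E ends v = 1")
        case True
        then obtain a where "xs = [a]" using len by (cases xs) auto
        then show ?thesis using True le setxs unfolding xs_def[symmetric] H_def[symmetric]
          by (auto simp: A_cor_def)
      next
        case False
        then have d2: "degree_in E ends v \<ge> 2" using assms(2) vV by fastforce
        have "A_cor 1 0 (degree_in E ends v) xs = (if count (mset xs) 1 = 2 then 1 else 0)"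
          using mset_two_ones[OF setxs] len d2 by (auto simp: A_cor_def)
        then show ?thesis using cnt unfolding xs_def H_def by simp
      qed
    qed
    have "(\<Prod>v\<in>V. A_cor 1 0 (degree_in E ends v) (map (cS S) (sorted_list_of_set (half_edges_at E ends v))))
         = (\<Prod>v\<in>V. (if degree_in S ends v = 2 then 1 else 0 :: complex))"
      using fac by (rule prod.cong[OF refl])
    also have "\<dots> = (if P S then 1 else 0)" unfolding P_def by (rule prod_indicator[OF finV])
    finally show ?thesis unfolding tm_def using B1 by simp
  qed
  have "(\<Sum>c \<in> half_edges E \<rightarrow>\<^sub>E {1..2}. tm c) = (\<Sum>c \<in> cS ` Pow E. tm c)"
    by (rule sum.mono_neutral_right[OF finPi sub]) (use zero in auto)
  also have "\<dots> = (\<Sum>S \<in> Pow E. tm (cS S))"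
    by (rule sum.reindex[OF inj, unfolded o_def])
  also have "\<dots> = (\<Sum>S \<in> Pow E. (if P S then 1 else 0))"
    by (rule sum.cong[OF refl]) (use termS in auto)
  also have "\<dots> = of_nat (card (Pow E \<inter> {S. P S}))"
    using finE by (simp add: sum.If_cases)
  also have "Pow E \<inter> {S. P S} = spanning_cycles V E ends"
  proof (rule set_eqI, rule iffI)
    fix S assume "S \<in> Pow E \<inter> {S. P S}"
    then have SE: "S \<subseteq> E" and PS: "P S" by auto
    have "2 * card S = (\<Sum>v\<in>V. degree_in S ends v)" using handshake[OF assms(1) SE] by simp
    also have "\<dots> = 2 * card V" using PS unfolding P_def by simp
    finally show "S \<in> spanning_cycles V E ends" using SE PS unfolding P_def spanning_cycles_def by auto
  next
    fix S assume "S \<in> spanning_cycles V E ends"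
    then have SE: "S \<subseteq> E" and d: "\<forall>v\<in>V. degree_in S ends v = 0 \<or> degree_in S ends v = 2"
      and c: "card S = card V" unfolding spanning_cycles_def by auto
    have le: "\<forall>v\<in>V. degree_in S ends v \<le> 2" using d by auto
    have "(\<Sum>v\<in>V. 2 - degree_in S ends v) = (\<Sum>v\<in>V. 2) - (\<Sum>v\<in>V. degree_in S ends v)"
      using le by (intro sum_subtractf_nat) auto
    also have "\<dots> = 0" using handshake[OF assms(1) SE] c by simp
    finally have "\<forall>v\<in>V. 2 - degree_in S ends v = 0" using finV by simp
    then have "P S" using le unfolding P_def by force
    then show "S \<in> Pow E \<inter> {S. P S}" using SE by auto
  qed
  finally show ?thesis using pf by simp
qed

end
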